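(* Let $H$ be a finite-dimensional complex Hilbert space, $A$ a unital (real or complex) $*$-subalgebra of $\mathrm{End}_{\mathbb{C}}(H)$, $D$ a selfadjoint operator on $H$, and $J$ an antilinear isometry of $H$ with $J^2=\varepsilon 1$, $JD=\varepsilon' DJ$ for some $\varepsilon,\varepsilon'\in\{\pm1\}$, such that $[a,JbJ^{-1}]=0$ for all $a,b\in A$. With $D_0$ and $D_2$ as defined in the context, $D_0+D_2\in\Omega^1_D(A)$.
   Context: Let $A_{\mathbb{C}}$ be the complex $*$-subalgebra of $\mathrm{End}_{\mathbb{C}}(H)$ generated by $A$; write $A_{\mathbb{C}}\cong\bigoplus_{i=1}^N M_{n_i}(\mathbb{C})$ and let $P_1,\dots,P_N$ be the (orthogonal projections representing the) units of the summands, so $\sum_iP_i=1$. Set $Q_j=JP_jJ^{-1}$ and $D_{ij,kl}=P_iQ_jDP_kQ_l$. Define $D_0=\sum_{i,j,k:\,i\neq k}D_{ij,kj}$, $D_1=\sum_{i,j,l:\,j\neq l}D_{ij,il}$, $D_2=\sum_{i,j,k,l:\,i\neq k,\,j\neq l}D_{ij,kl}$, $D_R=\sum_{i,j}D_{ij,ij}$, so $D=D_0+D_1+D_2+D_R$. $\Omega^1_D(A)$ is the complex linear span in $\mathrm{End}_{\mathbb{C}}(H)$ of the operators $a[D,b]$, $a,b\in A$. *)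

theory Defs
  imports "HOL-Analysis.Analysis"
begin

text \<open>H is modelled as the finite-dimensional complex Hilbert space complex^'n
  (standard inner product; the norm on vectors is the Euclidean one).
  Operators in End_C(H) are complex 'n x 'n matrices.\<close>

type_synonym 'n cop = "complex^'n^'n"

definition adj :: "'n::finite cop \<Rightarrow> 'n cop" where
  "adj M = (\<chi> i j. cnj (M $ j $ i))"

definition csc :: "complex \<Rightarrow> 'n::finite cop \<Rightarrow> 'n cop" where
  "csc c M = (\<chi> i j. c * M $ i $ j)"

definition real_star_subalg :: "'n::finite cop set \<Rightarrow> bool" where
  "real_star_subalg S \<longleftrightarrow> mat 1 \<in> S \<and>
     (\<forall>a\<in>S. \<forall>b\<in>S. a + b \<in> S \<and> a ** b \<in> S) \<and>
     (\<forall>a\<in>S. \<forall>r::real. csc (complex_of_real r) a \<in> S) \<and>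
     (\<forall>a\<in>S. adj a \<in> S)"

definition complex_star_subalg :: "'n::finite cop set \<Rightarrow> bool" where
  "complex_star_subalg S \<longleftrightarrow> 0 \<in> S \<and>
     (\<forall>a\<in>S. \<forall>b\<in>S. a + b \<in> S \<and> a ** b \<in> S) \<and>
     (\<forall>a\<in>S. \<forall>c::complex. csc c a \<in> S) \<and>
     (\<forall>a\<in>S. adj a \<in> S)"

definition AC :: "'n::finite cop set \<Rightarrow> 'n cop set" where
  "AC A = \<Inter> {S. complex_star_subalg S \<and> A \<subseteq> S}"

definition central_proj :: "'n::finite cop set \<Rightarrow> 'n cop \<Rightarrow> bool" where
  "central_proj B P \<longleftrightarrow> P \<in> B \<and> P ** P = P \<and> adj P = P \<and> (\<forall>a\<in>B. P ** a = a ** P)"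

text \<open>The units P_i of the simple summands of A_C = the minimal (nonzero)
  central projections of A_C.\<close>
definition summand_units :: "'n::finite cop set \<Rightarrow> 'n cop set" where
  "summand_units A = {P. central_proj (AC A) P \<and> P \<noteq> 0 \<and>
      (\<forall>Q. central_proj (AC A) Q \<and> Q ** P = Q \<longrightarrow> Q = 0 \<or> Q = P)}"

definition antilinear_isometry :: "(complex^'n::finite \<Rightarrow> complex^'n) \<Rightarrow> bool" where
  "antilinear_isometry J \<longleftrightarrow> (\<forall>x y. J (x + y) = J x + J y) \<and>
     (\<forall>c x. J (c *s x) = cnj c *s J x) \<and> (\<forall>x. norm (J x) = norm x)"

definition conjJ :: "(complex^'n::finite \<Rightarrow> complex^'n) \<Rightarrow> 'n cop \<Rightarrow> 'n cop" where
  "conjJ J M = matrix (\<lambda>x. J (M *v inv J x))"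

definition Dblock :: "(complex^'n::finite \<Rightarrow> complex^'n) \<Rightarrow> 'n cop \<Rightarrow> 'n cop \<Rightarrow> 'n cop \<Rightarrow> 'n cop \<Rightarrow> 'n cop \<Rightarrow> 'n cop" where
  "Dblock J D PPi PPj PPk PPl = PPi ** conjJ J PPj ** D ** PPk ** conjJ J PPl"

definition D0 :: "'n::finite cop set \<Rightarrow> (complex^'n \<Rightarrow> complex^'n) \<Rightarrow> 'n cop \<Rightarrow> 'n cop" where
  "D0 A J D = (\<Sum>PPi\<in>summand_units A. \<Sum>PPj\<in>summand_units A. \<Sum>PPk\<in>summand_units A - {PPi}.
        Dblock J D PPi PPj PPk PPj)"

definition D2 :: "'n::finite cop set \<Rightarrow> (complex^'n \<Rightarrow> complex^'n) \<Rightarrow> 'n cop \<Rightarrow> 'n cop" where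
  "D2 A J D = (\<Sum>PPi\<in>summand_units A. \<Sum>PPj\<in>summand_units A. \<Sum>PPk\<in>summand_units A - {PPi}.
        \<Sum>PPl\<in>summand_units A - {PPj}. Dblock J D PPi PPj PPk PPl)"

definition Omega1 :: "'n::finite cop \<Rightarrow> 'n cop set \<Rightarrow> 'n cop set" where
  "Omega1 D A = {\<Sum>i<m. csc (c i) (a i ** (D ** b i - b i ** D)) | (m::nat) c a b.
                   \<forall>i<m. a i \<in> A \<and> b i \<in> A}"

end

theory Submission
  imports Defs
begin


lemma csc_add: "csc c (x + y) = csc c x + csc c y"
  by (simp add: csc_def vec_eq_iff distrib_left)
lemma csc_zero: "csc c 0 = 0" by (simp add: csc_def vec_eq_iff)
lemma csc_csc: "csc c (csc d x) = csc (c*d) x" by (simp add: csc_def vec_eq_iff mult.assoc)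
lemma csc_one: "csc 1 x = x" by (simp add: csc_def vec_eq_iff)
lemma csc_diff: "csc c (x - y) = csc c x - csc c y"
  by (simp add: csc_def vec_eq_iff right_diff_distrib)
lemma csc_m1: "csc (-1) x = - x" by (simp add: csc_def vec_eq_iff)
lemma csc_mul_left: "csc c x ** y = csc c (x ** y)"
  by (simp add: csc_def matrix_matrix_mult_def vec_eq_iff sum_distrib_left mult.assoc)
lemma csc_mul_right: "x ** csc c y = csc c (x ** y)"
  by (simp add: csc_def matrix_matrix_mult_def vec_eq_iff sum_distrib_left mult_ac)
lemma madd_rdistrib: "(A + B) ** C = A ** C + B ** (C::'a::semiring_1^'n^'m)"
  by (vector matrix_matrix_mult_def sum.distrib[symmetric] field_simps)
lemma mdiff_ldistrib: "A ** (B - C) = A ** B - A ** (C::'a::ring_1^'n^'m)"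
  by (simp add: matrix_matrix_mult_def vec_eq_iff sum_subtractf right_diff_distrib)
lemma mdiff_rdistrib: "(B - C) ** A = B ** A - C ** (A::'a::ring_1^'n^'m)"
  by (simp add: matrix_matrix_mult_def vec_eq_iff sum_subtractf left_diff_distrib)
lemma adj_add: "adj (x+y) = adj x + adj y" by (simp add: adj_def vec_eq_iff)
lemma adj_diff: "adj (x-y) = adj x - adj y" by (simp add: adj_def vec_eq_iff)
lemma adj_csc: "adj (csc c x) = csc (cnj c) (adj x)" by (simp add: adj_def csc_def vec_eq_iff)
lemma adj_mul: "adj (x ** y) = adj y ** adj x"
  by (simp add: adj_def matrix_matrix_mult_def vec_eq_iff mult.commute)
lemma adj_zero: "adj 0 = 0" by (simp add: adj_def vec_eq_iff)
lemma adj_one: "adj (mat 1) = mat 1" by (simp add: adj_def mat_def vec_eq_iff)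
lemma adj_sum: "adj (sum f I) = sum (\<lambda>i. adj (f i)) I"
  by (induction I rule: infinite_finite_induct) (auto simp: adj_add adj_zero)
lemma msum_left: "sum f I ** (M::'a::semiring_1^'n^'n) = sum (\<lambda>i. f i ** M) I"
  by (induction I rule: infinite_finite_induct) (auto simp: madd_rdistrib)
lemma msum_right: "(M::'a::semiring_1^'n^'n) ** sum f I = sum (\<lambda>i. M ** f i) I"
  by (induction I rule: infinite_finite_induct) (auto simp: matrix_add_ldistrib)

lemma sum_split_nat: "sum f {..<m+(n::nat)} = sum f {..<m} + (\<Sum>i<n. f (m+i))"
  by (induct n) (auto simp: add.assoc)

lemma om0: "0 \<in> Omega1 D A"
  unfolding Omega1_def by (rule CollectI, rule exI[of _ 0]) auto

lemma omAdd:
  assumes "x \<in> Omega1 D A" "y \<in> Omega1 D A" shows "x + y \<in> Omega1 D A"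
proof -
  obtain m :: nat and c a b where x: "x = (\<Sum>i<m. csc (c i) (a i ** (D ** b i - b i ** D)))"
    and ab: "\<forall>i<m. a i \<in> A \<and> b i \<in> A" using assms(1) unfolding Omega1_def by blast
  obtain m' :: nat and c' a' b' where y: "y = (\<Sum>i<m'. csc (c' i) (a' i ** (D ** b' i - b' i ** D)))"
    and ab': "\<forall>i<m'. a' i \<in> A \<and> b' i \<in> A" using assms(2) unfolding Omega1_def by blast
  define C where "C i = (if i < m then c i else c' (i - m))" for i
  define AA where "AA i = (if i < m then a i else a' (i - m))" for i
  define BB where "BB i = (if i < m then b i else b' (i - m))" for i
  have "x + y = (\<Sum>i<m+m'. csc (C i) (AA i ** (D ** BB i - BB i ** D)))"
    unfolding sum_split_nat x y C_def AA_def BB_def by simp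
  moreover have "\<forall>i<m+m'. AA i \<in> A \<and> BB i \<in> A"
    using ab ab' unfolding AA_def BB_def by auto
  ultimately show ?thesis unfolding Omega1_def by blast
qed

lemma omCsc:
  assumes "x \<in> Omega1 D A" shows "csc d x \<in> Omega1 D A"
proof -
  obtain m :: nat and c a b where x: "x = (\<Sum>i<m. csc (c i) (a i ** (D ** b i - b i ** D)))"
    and ab: "\<forall>i<m. a i \<in> A \<and> b i \<in> A" using assms(1) unfolding Omega1_def by blast
  have cs: "csc d (sum f I) = sum (\<lambda>i. csc d (f i)) I" for f and I :: "nat set"
    by (induction I rule: infinite_finite_induct) (auto simp: csc_add csc_zero)
  have eq: "csc d x = (\<Sum>i<m. csc (d * c i) (a i ** (D ** b i - b i ** D)))"
    unfolding x cs csc_csc ..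
  show ?thesis unfolding Omega1_def
    apply (rule CollectI, rule exI[of _ m], rule exI[of _ "\<lambda>i. d * c i"], rule exI[of _ a], rule exI[of _ b])
    using ab eq by simp
qed

lemma omSum: "(\<And>i. i \<in> I \<Longrightarrow> f i \<in> Omega1 D A) \<Longrightarrow> sum f I \<in> Omega1 D A"
  by (induction I rule: infinite_finite_induct) (auto simp: om0 omAdd)

lemma omBase: "a \<in> A \<Longrightarrow> b \<in> A \<Longrightarrow> a ** (D ** b - b ** D) \<in> Omega1 D A"
  unfolding Omega1_def
  apply (rule CollectI, rule exI[of _ 1], rule exI[of _ "\<lambda>_. 1"], rule exI[of _ "\<lambda>_. a"], rule exI[of _ "\<lambda>_. b"])
  by (simp add: csc_one)

inductive_set spanC :: "'n::finite cop set \<Rightarrow> 'n cop set" for A where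
  sp0: "0 \<in> spanC A"
| spA: "a \<in> A \<Longrightarrow> a \<in> spanC A"
| spAdd: "x \<in> spanC A \<Longrightarrow> y \<in> spanC A \<Longrightarrow> x + y \<in> spanC A"
| spCsc: "x \<in> spanC A \<Longrightarrow> csc c x \<in> spanC A"

lemma omSpan1:
  assumes "a \<in> A" "y \<in> spanC A" shows "a ** (D ** y - y ** D) \<in> Omega1 D A"
  using assms(2)
proof induction
  case sp0 then show ?case by (simp add: om0)
next
  case (spA b) then show ?case using omBase assms(1) by blast
next
  case (spAdd x y)
  have "D ** (x + y) - (x + y) ** D = (D ** x - x ** D) + (D ** y - y ** D)"
    unfolding matrix_add_ldistrib madd_rdistrib by (simp add: algebra_simps)
  then have "a ** (D ** (x + y) - (x + y) ** D) = a ** (D ** x - x ** D) + a ** (D ** y - y ** D)"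
    by (simp only: matrix_add_ldistrib)
  then show ?case using spAdd omAdd by metis
next
  case (spCsc x c)
  have "a ** (D ** csc c x - csc c x ** D) = csc c (a ** (D ** x - x ** D))"
    by (simp only: csc_mul_left csc_mul_right csc_diff[symmetric])
  then show ?case using spCsc omCsc by metis
qed

lemma omSpan:
  assumes "x \<in> spanC A" "y \<in> spanC A" shows "x ** (D ** y - y ** D) \<in> Omega1 D A"
  using assms(1)
proof induction
  case sp0 then show ?case by (simp add: om0)
next
  case (spA b) then show ?case using omSpan1 assms(2) by blast
next
  case (spAdd x1 x2)
  then show ?case by (simp only: madd_rdistrib omAdd)
next
  case (spCsc x c)
  then show ?case by (simp only: csc_mul_left omCsc)
qed



lemma spanC_mul:
  assumes cl: "\<forall>a\<in>A. \<forall>b\<in>A. a ** b \<in> A"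
    and "x \<in> spanC A" "y \<in> spanC A" shows "x ** y \<in> spanC A"
  using assms(2)
proof induction
  case sp0 then show ?case by (simp add: spanC.sp0)
next
  case (spA a)
  show ?case using assms(3)
  proof induction
    case sp0 then show ?case by (simp add: spanC.sp0)
  next
    case (spA b) then show ?case using cl \<open>a \<in> A\<close> by (simp add: spanC.spA)
  next
    case (spAdd y1 y2) then show ?case by (simp add: matrix_add_ldistrib spanC.spAdd)
  next
    case (spCsc y c) then show ?case by (simp add: csc_mul_right spanC.spCsc)
  qed
next
  case (spAdd x1 x2) then show ?case by (simp add: madd_rdistrib spanC.spAdd)
next
  case (spCsc x c) then show ?case by (simp add: csc_mul_left spanC.spCsc)
qed

lemma spanC_adj:
  assumes cl: "\<forall>a\<in>A. adj a \<in> A" and "x \<in> spanC A" shows "adj x \<in> spanC A"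
  using assms(2)
proof induction
  case sp0 then show ?case by (simp only: adj_zero spanC.sp0)
next
  case (spA a) then show ?case using cl by (simp add: spanC.spA)
next
  case (spAdd x y) then show ?case by (simp only: adj_add spanC.spAdd)
next
  case (spCsc x c) then show ?case by (simp only: adj_csc spanC.spCsc)
qed

lemma spanC_subalg:
  assumes "real_star_subalg A" shows "complex_star_subalg (spanC A)"
proof -
  have m: "\<forall>a\<in>A. \<forall>b\<in>A. a ** b \<in> A" and ad: "\<forall>a\<in>A. adj a \<in> A"
    using assms unfolding real_star_subalg_def by auto
  show ?thesis unfolding complex_star_subalg_def
  proof (intro conjI ballI allI)
    show "0 \<in> spanC A" by (rule spanC.sp0)
    fix x assume x: "x \<in> spanC A"
    show "adj x \<in> spanC A" using spanC_adj[OF ad x] .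
    fix c show "csc c x \<in> spanC A" using spanC.spCsc[OF x] .
  next
    fix x y assume x: "x \<in> spanC A" and y: "y \<in> spanC A"
    show "x + y \<in> spanC A" using spanC.spAdd[OF x y] .
    show "x ** y \<in> spanC A" using spanC_mul[OF m x y] .
  qed
qed

lemma AC_sub_span: "real_star_subalg A \<Longrightarrow> AC A \<subseteq> spanC A"
proof -
  assume a: "real_star_subalg A"
  have "A \<subseteq> spanC A" by (auto intro: spanC.spA)
  then show ?thesis unfolding AC_def using spanC_subalg[OF a] by blast
qed

lemma AC_subalg: "complex_star_subalg (AC A)"
  unfolding complex_star_subalg_def
proof (intro conjI ballI allI)
  show "0 \<in> AC A" unfolding AC_def complex_star_subalg_def by blast
  fix a assume a: "a \<in> AC A"
  show "adj a \<in> AC A" using a unfolding AC_def complex_star_subalg_def by blast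
  fix c show "csc c a \<in> AC A" using a unfolding AC_def complex_star_subalg_def by blast
next
  fix a b assume a: "a \<in> AC A" and b: "b \<in> AC A"
  show "a + b \<in> AC A" using a b unfolding AC_def complex_star_subalg_def by blast
  show "a ** b \<in> AC A" using a b unfolding AC_def complex_star_subalg_def by blast
qed

lemma A_sub_AC: "A \<subseteq> AC A"
  unfolding AC_def by auto

locale csa =
  fixes B :: "'n::finite cop set"
  assumes sub: "complex_star_subalg B"
    and one: "mat 1 \<in> B"
begin

lemma zero: "0 \<in> B" using sub unfolding complex_star_subalg_def by auto
lemma add: "x \<in> B \<Longrightarrow> y \<in> B \<Longrightarrow> x + y \<in> B" using sub unfolding complex_star_subalg_def by auto
lemma mul: "x \<in> B \<Longrightarrow> y \<in> B \<Longrightarrow> x ** y \<in> B" using sub unfolding complex_star_subalg_def by auto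
lemma cs: "x \<in> B \<Longrightarrow> csc c x \<in> B" using sub unfolding complex_star_subalg_def by auto
lemma diff: "x \<in> B \<Longrightarrow> y \<in> B \<Longrightarrow> x - y \<in> B"
  using add[of x "csc (-1) y"] cs[of y "-1"] by (simp add: csc_m1)
lemma sumB: "(\<And>i. i \<in> I \<Longrightarrow> f i \<in> B) \<Longrightarrow> sum f I \<in> B"
  by (induction I rule: infinite_finite_induct) (auto simp: zero add)

abbreviation "cp \<equiv> central_proj B"

lemma cpD:
  assumes "cp P"
  shows "P \<in> B" "P ** P = P" "adj P = P" "\<And>a. a \<in> B \<Longrightarrow> P ** a = a ** P"
  using assms unfolding central_proj_def by auto

lemma cp_mul:
  assumes P: "cp P" and Q: "cp Q" shows "cp (P ** Q)"
proof -
  have PQ: "P ** Q = Q ** P" using cpD(4)[OF P cpD(1)[OF Q]] .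
  have "P ** Q \<in> B" using mul cpD(1)[OF P] cpD(1)[OF Q] by blast
  moreover have "(P ** Q) ** (P ** Q) = P ** Q"
  proof -
    have "(P ** Q) ** (P ** Q) = P ** (Q ** P) ** Q" by (simp only: matrix_mul_assoc)
    also have "\<dots> = (P ** P) ** (Q ** Q)" by (simp only: PQ[symmetric] matrix_mul_assoc)
    finally show ?thesis by (simp only: cpD(2)[OF P] cpD(2)[OF Q])
  qed
  moreover have "adj (P ** Q) = P ** Q"
    by (simp only: adj_mul cpD(3)[OF P] cpD(3)[OF Q] PQ)
  moreover have "\<forall>a\<in>B. (P ** Q) ** a = a ** (P ** Q)"
  proof
    fix a assume a: "a \<in> B"
    have "(P ** Q) ** a = P ** (Q ** a)" by (simp only: matrix_mul_assoc)
    also have "\<dots> = P ** (a ** Q)" by (simp only: cpD(4)[OF Q a])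
    also have "\<dots> = (P ** a) ** Q" by (simp only: matrix_mul_assoc)
    also have "\<dots> = (a ** P) ** Q" by (simp only: cpD(4)[OF P a])
    finally show "(P ** Q) ** a = a ** (P ** Q)" by (simp only: matrix_mul_assoc)
  qed
  ultimately show ?thesis unfolding central_proj_def by blast
qed

definition atom where
  "atom P \<longleftrightarrow> cp P \<and> P \<noteq> 0 \<and> (\<forall>Q. cp Q \<and> Q ** P = Q \<longrightarrow> Q = 0 \<or> Q = P)"

lemma atoms_orth:
  assumes "atom P" "atom P'" "P \<noteq> P'" shows "P ** P' = 0"
proof -
  have P: "cp P" and P': "cp P'" using assms unfolding atom_def by auto
  have c: "cp (P ** P')" using cp_mul[OF P P'] .
  have comm: "P' ** P = P ** P'" using cpD(4)[OF P' cpD(1)[OF P]] .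
  have "(P ** P') ** P = P ** (P' ** P)" by (simp only: matrix_mul_assoc)
  also have "\<dots> = (P ** P) ** P'" by (simp only: comm matrix_mul_assoc)
  also have "\<dots> = P ** P'" by (simp only: cpD(2)[OF P])
  finally have "(P ** P') ** P = P ** P'" .
  then have "P ** P' = 0 \<or> P ** P' = P" using assms(1) c unfolding atom_def by blast
  moreover have "P ** P' \<noteq> P"
  proof
    assume "P ** P' = P"
    then have "P = 0 \<or> P = P'" using assms(2) P unfolding atom_def by blast
    then show False using assms unfolding atom_def by blast
  qed
  ultimately show ?thesis by blast
qed

definition fixsp :: "'n cop \<Rightarrow> (complex^'n) set" where
  "fixsp Q = {x. Q *v x = x}"

lemma fixsp_subspace: "subspace (fixsp Q)"
proof -
  have "Q *v (c *\<^sub>R x) = c *\<^sub>R (Q *v x)" for c x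
    using matrix_vector_mul_linear[of Q] linear_iff by blast
  then show ?thesis unfolding fixsp_def subspace_def
    by (auto simp: matrix_vector_right_distrib)
qed

lemma exists_atom:
  assumes T: "cp T" "T \<noteq> 0" shows "\<exists>P. atom P \<and> P ** T = P"
proof -
  define S where "S = {Q. cp Q \<and> Q \<noteq> 0 \<and> Q ** T = Q}"
  have "T \<in> S" using T unfolding S_def central_proj_def by auto
  then obtain Q0 where Q0: "Q0 \<in> S" and minQ: "\<And>Q. Q \<in> S \<Longrightarrow> dim (fixsp Q0) \<le> dim (fixsp Q)"
    using ex_has_least_nat[of "\<lambda>Q. Q \<in> S" T "\<lambda>Q. dim (fixsp Q)"] by blast
  have "atom Q0"
    unfolding atom_def
  proof (intro conjI allI impI)
    show "cp Q0" "Q0 \<noteq> 0" using Q0 unfolding S_def by auto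
    fix Q assume Q: "cp Q \<and> Q ** Q0 = Q"
    show "Q = 0 \<or> Q = Q0"
    proof (rule ccontr)
      assume nz: "\<not> (Q = 0 \<or> Q = Q0)"
      have Q0T: "Q0 ** T = Q0" using Q0 unfolding S_def by simp
      have "Q ** T = (Q ** Q0) ** T" using Q by simp
      also have "\<dots> = Q ** (Q0 ** T)" by (simp add: matrix_mul_assoc)
      also have "\<dots> = Q" using Q0T Q by simp
      finally have "Q ** T = Q" .
      then have "Q \<in> S" using Q nz unfolding S_def by auto
      then have le: "dim (fixsp Q0) \<le> dim (fixsp Q)" by (rule minQ)
      have comm: "Q0 ** Q = Q ** Q0" using Q Q0 unfolding S_def central_proj_def by auto
      have sub: "fixsp Q \<subseteq> fixsp Q0"
      proof
        fix x assume "x \<in> fixsp Q"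
        then have "Q *v x = x" unfolding fixsp_def by simp
        then have "Q0 *v x = (Q0 ** Q) *v x" by (metis matrix_vector_mul_assoc)
        also have "\<dots> = Q *v x" using comm Q by simp
        finally show "x \<in> fixsp Q0" using \<open>Q *v x = x\<close> unfolding fixsp_def by simp
      qed
      have eq: "fixsp Q = fixsp Q0"
        using subspace_dim_equal[OF fixsp_subspace fixsp_subspace sub le] .
      have "(Q ** Q0) *v y = Q0 *v y" for y
      proof -
        have "Q0 *v (Q0 *v y) = Q0 *v y"
          using Q0 unfolding S_def central_proj_def by (simp add: matrix_vector_mul_assoc)
        then have "Q0 *v y \<in> fixsp Q" using eq unfolding fixsp_def by simp
        then show ?thesis unfolding fixsp_def by (simp add: matrix_vector_mul_assoc[symmetric])
      qed
      then have "Q ** Q0 = Q0" by (simp add: matrix_eq)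
      then show False using Q nz by simp
    qed
  qed
  then show ?thesis using Q0 unfolding S_def by blast
qed

lemma atoms_sum:
  assumes fin: "finite U" and U: "U = {P. atom P}"
  shows "sum id U = mat 1"
proof -
  define S where "S = sum id U"
  have at: "P \<in> U \<Longrightarrow> atom P" for P using U by simp
  have PS: "P ** S = P" if "P \<in> U" for P
  proof -
    have "P ** S = (\<Sum>P'\<in>U. P ** P')" unfolding S_def by (simp add: msum_right)
    also have "\<dots> = P ** P + (\<Sum>P'\<in>U - {P}. P ** P')" using fin that by (simp add: sum.remove)
    also have "(\<Sum>P'\<in>U - {P}. P ** P') = 0"
      by (rule sum.neutral) (use that at atoms_orth in auto)
    finally show ?thesis using at[OF that] unfolding atom_def central_proj_def by simp
  qed
  have SB: "S \<in> B" unfolding S_def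
    by (rule sumB) (use at in \<open>auto simp: atom_def central_proj_def\<close>)
  have SS: "S ** S = S" unfolding S_def[symmetric] using PS
    by (simp add: S_def msum_left)
  have adjS: "adj S = S" unfolding S_def using at
    by (simp add: adj_sum atom_def central_proj_def)
  have cS: "\<forall>a\<in>B. S ** a = a ** S" unfolding S_def using at
    by (simp add: msum_left msum_right atom_def central_proj_def)
  define T where "T = mat 1 - S"
  have cT: "cp T" unfolding central_proj_def T_def
  proof (intro conjI ballI)
    show "mat 1 - S \<in> B" using one SB diff by blast
    show "(mat 1 - S) ** (mat 1 - S) = mat 1 - S"
      by (simp add: mdiff_ldistrib mdiff_rdistrib SS)
    show "adj (mat 1 - S) = mat 1 - S" by (simp add: adj_diff adj_one adjS)
    fix a assume "a \<in> B"
    then show "(mat 1 - S) ** a = a ** (mat 1 - S)"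
      using cS by (simp add: mdiff_ldistrib mdiff_rdistrib)
  qed
  have "T = 0"
  proof (rule ccontr)
    assume "T \<noteq> 0"
    then obtain P where P: "atom P" "P ** T = P" using exists_atom cT by blast
    have "P ** T = 0" using PS[of P] P(1) U by (simp add: T_def mdiff_ldistrib)
    then show False using P unfolding atom_def by simp
  qed
  then show ?thesis unfolding T_def S_def by simp
qed

end


theorem lemma6:
  fixes A :: "'n::finite cop set"
    and D :: "'n cop"
    and J :: "complex^'n \<Rightarrow> complex^'n"
    and \<epsilon> \<epsilon>' :: complex
  assumes "real_star_subalg A"
    and "adj D = D"
    and "antilinear_isometry J"
    and "\<epsilon> \<in> {1, -1}" and "\<epsilon>' \<in> {1, -1}"
    and "\<forall>x. J (J x) = \<epsilon> *s x"
    and "\<forall>x. J (D *v x) = \<epsilon>' *s (D *v J x)"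
    and "\<forall>a\<in>A. \<forall>b\<in>A. \<forall>x. a *v (J (b *v (inv J x))) = J (b *v (inv J (a *v x)))"
  shows "D0 A J D + D2 A J D \<in> Omega1 D A"
proof -
  define U where "U = summand_units A"
  have one1: "mat 1 \<in> AC A" using assms(1) A_sub_AC unfolding real_star_subalg_def by blast
  interpret C: csa "AC A" using AC_subalg one1 by unfold_locales
  show ?thesis
  proof (cases "finite U")
    case False
    then show ?thesis unfolding D0_def D2_def U_def[symmetric] by (simp add: om0)
  next
    case fin: True
    have UA: "U = {P. C.atom P}" unfolding U_def summand_units_def C.atom_def by simp
    have S1: "sum id U = mat 1" using C.atoms_sum[OF fin UA] .
    have Jadd: "\<And>x y. J (x + y) = J x + J y" using assms(3) unfolding antilinear_isometry_def by blast
    have J0: "J 0 = 0" using Jadd[of 0 0] by simp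
    have ee: "\<epsilon> * \<epsilon> = 1" using assms(4) by auto
    have "J (J (\<epsilon> *s y)) = y" for y
    proof -
      have "J (J (\<epsilon> *s y)) = \<epsilon> *s (\<epsilon> *s y)" using assms(6) by blast
      also have "\<dots> = y" by (simp add: vec_eq_iff mult.assoc[symmetric] ee)
      finally show ?thesis .
    qed
    then have surjJ: "surj J" by (rule surjI)
    have conjJ_add: "conjJ J (M + N) = conjJ J M + conjJ J N" for M N :: "'n cop"
      unfolding conjJ_def matrix_def by (simp add: vec_eq_iff matrix_vector_mult_add_rdistrib Jadd)
    have conjJ_zero: "conjJ J 0 = 0"
      unfolding conjJ_def matrix_def by (simp add: vec_eq_iff J0)
    have conjJ_sum: "conjJ J (sum f I) = sum (\<lambda>i. conjJ J (f i)) I" for f :: "'n cop \<Rightarrow> 'n cop" and I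
      by (induction I rule: infinite_finite_induct) (auto simp: conjJ_zero conjJ_add)
    have "(\<lambda>x. J (inv J x)) = id" using surj_f_inv_f[OF surjJ] by auto
    then have conjJ_one: "conjJ J (mat 1) = mat 1"
      unfolding conjJ_def by (simp add: matrix_id_mat_1)
    have QS: "(\<Sum>j\<in>U. conjJ J j) = mat 1" using conjJ_sum[of id U] S1 conjJ_one by simp
    have inner: "(\<Sum>j\<in>U. \<Sum>l\<in>U. Dblock J D i j k l) = i ** D ** k" for i k
    proof -
      have l: "(\<Sum>l\<in>U. Dblock J D i j k l) = i ** conjJ J j ** (D ** k)" for j
      proof -
        have "(\<Sum>l\<in>U. Dblock J D i j k l) = (i ** conjJ J j ** D ** k) ** (\<Sum>l\<in>U. conjJ J l)"
          unfolding Dblock_def msum_right ..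
        also have "\<dots> = i ** conjJ J j ** (D ** k)" unfolding QS by (simp add: matrix_mul_assoc)
        finally show ?thesis .
      qed
      have "(\<Sum>j\<in>U. \<Sum>l\<in>U. Dblock J D i j k l) = (\<Sum>j\<in>U. i ** conjJ J j) ** (D ** k)"
        unfolding l msum_left ..
      also have "\<dots> = i ** D ** k"
        by (simp only: msum_right[symmetric] QS matrix_mul_rid matrix_mul_assoc)
      finally show ?thesis .
    qed
    have rem: "j \<in> U \<Longrightarrow> (\<Sum>l\<in>U. Dblock J D i j k l) = Dblock J D i j k j + (\<Sum>l\<in>U-{j}. Dblock J D i j k l)"
      for i j k using sum.remove[OF fin] by blast
    have "D0 A J D + D2 A J D = (\<Sum>i\<in>U. \<Sum>j\<in>U. \<Sum>k\<in>U-{i}. Dblock J D i j k j + (\<Sum>l\<in>U-{j}. Dblock J D i j k l))"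
      unfolding D0_def D2_def U_def[symmetric] by (simp only: sum.distrib)
    also have "\<dots> = (\<Sum>i\<in>U. \<Sum>j\<in>U. \<Sum>k\<in>U-{i}. \<Sum>l\<in>U. Dblock J D i j k l)"
      by (rule sum.cong[OF refl])+ (simp add: rem)
    also have "\<dots> = (\<Sum>i\<in>U. \<Sum>k\<in>U-{i}. \<Sum>j\<in>U. \<Sum>l\<in>U. Dblock J D i j k l)"
      by (rule sum.cong[OF refl]) (rule sum.swap)
    also have "\<dots> = (\<Sum>i\<in>U. \<Sum>k\<in>U-{i}. i ** D ** k)"
      by (simp only: inner)
    finally have eq: "D0 A J D + D2 A J D = (\<Sum>i\<in>U. \<Sum>k\<in>U-{i}. i ** D ** k)" .
    have span: "P \<in> U \<Longrightarrow> P \<in> spanC A" for P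
      using UA AC_sub_span[OF assms(1)] unfolding C.atom_def central_proj_def by blast
    have trm: "i ** D ** k \<in> Omega1 D A" if i: "i \<in> U" and k: "k \<in> U - {i}" for i k
    proof -
      have ik: "i ** k = 0" using C.atoms_orth[of i k] i k UA by auto
      have "i ** D ** k = i ** (D ** k - k ** D)"
        by (simp add: mdiff_ldistrib matrix_mul_assoc ik)
      then show ?thesis using omSpan[OF span span] i k by auto
    qed
    show ?thesis unfolding eq
      by (rule omSum, rule omSum, rule trm)
  qed
qed

end
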